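(* Let $G$ be a finite connected graph, fix an arbitrary orientation $\varepsilon$ of $G$ (the normal orientation) and a total order on $E(G)$. Then every Eulerian equivalence class of $\mathcal{BO}(G)$ contains exactly one reduced orientation.
   Context: An orientation assigns a direction to each edge. $\mathcal{BO}(G)$ is the set of orientations of $G$ with no nonempty directed cut, i.e. (for connected $G$) the totally cyclic orientations, in which every edge lies on a directed cycle. Two orientations $\varepsilon_1,\varepsilon_2$ are Eulerian equivalent if the spanning subgraph formed by the edges $\{e:\varepsilon_1(e)\neq\varepsilon_2(e)\}$, oriented by $\varepsilon_1$, has in-degree equal to out-degree at every vertex. Given the normal orientation $\varepsilon$ and the total order, an orientation $\varepsilon'$ is reduced if for every edge $e$, either $\varepsilon'(e)=\varepsilon(e)$, or there is no cycle that is directed with respect to $\varepsilon'$, contains $e$, and has all its other edges smaller than $e$. *)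

theory Defs
  imports Main
begin

(* A finite multigraph (loops and parallel edges allowed): vertex set V, edge set E,
   and ends e = (tail, head) of e in the fixed NORMAL orientation epsilon.
   An orientation is encoded by the set R \<subseteq> E of edges on which it differs from
   epsilon. *)

definition graph :: "'v set \<Rightarrow> 'e set \<Rightarrow> ('e \<Rightarrow> 'v \<times> 'v) \<Rightarrow> bool" where
  "graph V E ends \<longleftrightarrow> finite V \<and> finite E \<and>
     (\<forall>e\<in>E. fst (ends e) \<in> V \<and> snd (ends e) \<in> V)"

definition connected_graph :: "'v set \<Rightarrow> 'e set \<Rightarrow> ('e \<Rightarrow> 'v \<times> 'v) \<Rightarrow> bool" where
  "connected_graph V E ends \<longleftrightarrow>
     (\<forall>u\<in>V. \<forall>v\<in>V. (u, v) \<in> ({(a, b). \<exists>e\<in>E. ends e = (a, b) \<or> ends e = (b, a)})\<^sup>*)"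

definition arc :: "('e \<Rightarrow> 'v \<times> 'v) \<Rightarrow> 'e set \<Rightarrow> 'e \<Rightarrow> 'v \<times> 'v" where
  "arc ends R e = (if e \<in> R then (snd (ends e), fst (ends e)) else ends e)"

definition orientations :: "'e set \<Rightarrow> 'e set set" where
  "orientations E = {R. R \<subseteq> E}"

definition has_nonempty_dcut :: "'v set \<Rightarrow> 'e set \<Rightarrow> ('e \<Rightarrow> 'v \<times> 'v) \<Rightarrow> 'e set \<Rightarrow> bool" where
  "has_nonempty_dcut V E ends R \<longleftrightarrow>
     (\<exists>S \<subseteq> V.
        (let cut = {e\<in>E. (fst (ends e) \<in> S) \<noteq> (snd (ends e) \<in> S)} in
          cut \<noteq> {} \<and> (\<forall>e\<in>cut. fst (arc ends R e) \<in> S \<and> snd (arc ends R e) \<notin> S)))"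

definition BO :: "'v set \<Rightarrow> 'e set \<Rightarrow> ('e \<Rightarrow> 'v \<times> 'v) \<Rightarrow> 'e set set" where
  "BO V E ends = {R \<in> orientations E. \<not> has_nonempty_dcut V E ends R}"

definition eulerian_equiv :: "'v set \<Rightarrow> 'e set \<Rightarrow> ('e \<Rightarrow> 'v \<times> 'v) \<Rightarrow> 'e set \<Rightarrow> 'e set \<Rightarrow> bool" where
  "eulerian_equiv V E ends R1 R2 \<longleftrightarrow>
     (let D = {e\<in>E. (e \<in> R1) \<noteq> (e \<in> R2)} in
       \<forall>v\<in>V. card {e\<in>D. fst (arc ends R1 e) = v} = card {e\<in>D. snd (arc ends R1 e) = v})"

definition dcycle :: "'e set \<Rightarrow> ('e \<Rightarrow> 'v \<times> 'v) \<Rightarrow> 'e set \<Rightarrow> 'e list \<Rightarrow> bool" where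
  "dcycle E ends R es \<longleftrightarrow> es \<noteq> [] \<and> set es \<subseteq> E \<and> distinct es \<and>
     distinct (map (\<lambda>e. fst (arc ends R e)) es) \<and>
     (\<forall>i<length es. snd (arc ends R (es ! i)) = fst (arc ends R (es ! ((i + 1) mod length es))))"

definition reduced :: "'e set \<Rightarrow> ('e \<Rightarrow> 'v \<times> 'v) \<Rightarrow> ('e \<Rightarrow> 'e \<Rightarrow> bool) \<Rightarrow> 'e set \<Rightarrow> bool" where
  "reduced E ends lt R \<longleftrightarrow>
     (\<forall>e\<in>E. e \<notin> R \<or>
        \<not> (\<exists>es. dcycle E ends R es \<and> e \<in> set es \<and> (\<forall>f\<in>set es. f \<noteq> e \<longrightarrow> lt f e)))"

definition strict_total_order_on :: "'e set \<Rightarrow> ('e \<Rightarrow> 'e \<Rightarrow> bool) \<Rightarrow> bool" where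
  "strict_total_order_on E lt \<longleftrightarrow>
     (\<forall>x\<in>E. \<not> lt x x) \<and>
     (\<forall>x\<in>E. \<forall>y\<in>E. \<forall>z\<in>E. lt x y \<longrightarrow> lt y z \<longrightarrow> lt x z) \<and>
     (\<forall>x\<in>E. \<forall>y\<in>E. x \<noteq> y \<longrightarrow> lt x y \<or> lt y x)"

end

theory Submission
  imports Defs
begin

fun dpath :: "('e \<Rightarrow> 'v) \<Rightarrow> ('e \<Rightarrow> 'v) \<Rightarrow> 'e list \<Rightarrow> 'v \<Rightarrow> 'v \<Rightarrow> bool" where
  "dpath t h [] u w = (u = w)"
| "dpath t h (f#fs) u w = (t f = u \<and> dpath t h fs (h f) w)"

lemma dpath_append: "dpath t h (xs@ys) u w \<longleftrightarrow> (\<exists>m. dpath t h xs u m \<and> dpath t h ys m w)"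
  by (induction xs arbitrary: u) auto

lemma dpath_nth: "dpath t h fs u w \<Longrightarrow> Suc i < length fs \<Longrightarrow> h (fs!i) = t (fs!Suc i)"
proof (induction fs arbitrary: u i)
  case Nil then show ?case by simp
next
  case (Cons f fs)
  then show ?case by (cases fs; cases i) auto
qed

lemma dpath_last: "dpath t h fs u w \<Longrightarrow> fs \<noteq> [] \<Longrightarrow> h (last fs) = w"
proof (induction fs arbitrary: u)
  case Nil then show ?case by simp
next
  case (Cons f fs)
  then show ?case by (cases fs) auto
qed

lemma dpath_hd: "dpath t h fs u w \<Longrightarrow> fs \<noteq> [] \<Longrightarrow> t (hd fs) = u"
  by (cases fs) auto

lemma dpath_split: "dpath t h fs u w \<Longrightarrow> i < length fs \<Longrightarrow>
   dpath t h (take i fs) u (t (fs!i)) \<and> dpath t h (drop i fs) (t (fs!i)) w"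
proof -
  assume a: "dpath t h fs u w" "i < length fs"
  have "dpath t h (take i fs @ drop i fs) u w" using a by simp
  then obtain m where m: "dpath t h (take i fs) u m" "dpath t h (drop i fs) m w"
    unfolding dpath_append by blast
  have "drop i fs \<noteq> []" using a by simp
  then have "t (hd (drop i fs)) = m" using dpath_hd[OF m(2)] by simp
  then have "m = t (fs!i)" using a by (simp add: hd_drop_conv_nth)
  then show ?thesis using m by simp
qed

lemma dpath_distinct:
  "dpath t h fs u w \<Longrightarrow> \<exists>gs. dpath t h gs u w \<and> set gs \<subseteq> set fs \<and> distinct (map t gs) \<and> w \<notin> t ` set gs"
proof (induction "length fs" arbitrary: fs rule: less_induct)
  case less
  show ?case
  proof (cases "distinct (map t fs) \<and> w \<notin> t ` set fs")
    case True then show ?thesis using less.prems by blast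
  next
    case False
    then consider "\<not> distinct (map t fs)" | "w \<in> t ` set fs" by blast
    then show ?thesis
    proof cases
      case 1
      then obtain i j where ij: "i < length fs" "j < length fs" "i \<noteq> j" "t (fs!i) = t (fs!j)"
        by (auto simp: distinct_conv_nth)
      have "\<exists>i j. i < j \<and> j < length fs \<and> t (fs!i) = t (fs!j)"
      proof (cases "i < j")
        case True then show ?thesis using ij by blast
      next
        case False then have "j < i" using ij by simp
        then show ?thesis using ij by (intro exI[of _ j] exI[of _ i]) simp
      qed
      then obtain i j where ij: "i < j" "j < length fs" "t (fs!i) = t (fs!j)" by blast
      let ?gs = "take i fs @ drop j fs"
      have s1: "dpath t h (take i fs) u (t (fs!i))"
        using dpath_split[OF less.prems, of i] ij by simp
      have s2: "dpath t h (drop j fs) (t (fs!j)) w"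
        using dpath_split[OF less.prems, of j] ij by simp
      have p: "dpath t h ?gs u w"
        unfolding dpath_append using s1 s2 ij(3) by (intro exI[of _ "t (fs!i)"]) simp
      have l: "length ?gs < length fs" using ij by simp
      have ss: "set ?gs \<subseteq> set fs" by (auto dest: in_set_takeD in_set_dropD)
      obtain hs where "dpath t h hs u w" "set hs \<subseteq> set ?gs" "distinct (map t hs)" "w \<notin> t ` set hs"
        using less.hyps[OF l p] by blast
      then show ?thesis using ss by blast
    next
      case 2
      then obtain x where x: "x \<in> set fs" "w = t x" by blast
      then obtain i where i: "i < length fs" "fs!i = x" by (auto simp: in_set_conv_nth)
      let ?gs = "take i fs"
      have p: "dpath t h ?gs u w"
        using dpath_split[OF less.prems, of i] i x by simp
      have l: "length ?gs < length fs" using i by simp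
      have ss: "set ?gs \<subseteq> set fs" by (rule set_take_subset)
      obtain hs where "dpath t h hs u w" "set hs \<subseteq> set ?gs" "distinct (map t hs)" "w \<notin> t ` set hs"
        using less.hyps[OF l p] by blast
      then show ?thesis using ss by blast
    qed
  qed
qed

lemma card_group:
  assumes "finite S" "finite D"
  shows "card {f\<in>D. g f \<in> S} = (\<Sum>v\<in>S. card {f\<in>D. g f = v})"
proof -
  have "(\<Sum>v\<in>S. card {f\<in>D. g f = v}) = (\<Sum>v\<in>S. card {x. x \<in> {f\<in>D. g f \<in> S} \<and> g x = v})"
    by (intro sum.cong refl arg_cong[where f=card]) auto
  also have "\<dots> = (\<Sum>v\<in>S. \<Sum>x\<in>{x. x \<in> {f\<in>D. g f \<in> S} \<and> g x = v}. 1)" by simp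
  also have "\<dots> = (\<Sum>x\<in>{f\<in>D. g f \<in> S}. 1)"
    by (rule sum.group) (use assms in auto)
  finally show ?thesis by simp
qed

lemma balanced_cycle:
  assumes finV: "finite V" and finD: "finite D"
   and inV: "\<forall>f\<in>D. t f \<in> V \<and> h f \<in> V"
   and bal: "\<forall>v\<in>V. card {f\<in>D. t f = v} = card {f\<in>D. h f = v}"
   and e: "e \<in> D"
  shows "\<exists>es. es \<noteq> [] \<and> set es \<subseteq> D \<and> distinct es \<and> distinct (map t es) \<and>
     (\<forall>i<length es. h (es!i) = t (es!((i+1) mod length es))) \<and> e \<in> set es"
proof -
  define S where "S = {v. \<exists>fs. set fs \<subseteq> D - {e} \<and> dpath t h fs (h e) v}"
  have "t e \<in> S"
  proof (rule ccontr)
    assume nS: "t e \<notin> S"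
    have SV: "S \<subseteq> V"
    proof
      fix v assume "v \<in> S"
      then obtain fs where fs: "set fs \<subseteq> D - {e}" "dpath t h fs (h e) v" unfolding S_def by blast
      show "v \<in> V"
      proof (cases "fs = []")
        case True then show ?thesis using fs inV e by auto
      next
        case False
        then have "h (last fs) = v" using dpath_last[OF fs(2)] by simp
        moreover have "last fs \<in> D" using False fs last_in_set by blast
        ultimately show ?thesis using inV by auto
      qed
    qed
    have clos: "h f \<in> S" if fD: "f \<in> D" "f \<noteq> e" "t f \<in> S" for f
    proof -
      obtain fs where fs: "set fs \<subseteq> D - {e}" "dpath t h fs (h e) (t f)"
        using fD(3) unfolding S_def by blast
      have "dpath t h (fs @ [f]) (h e) (h f)" using fs by (auto simp: dpath_append)
      moreover have "set (fs @ [f]) \<subseteq> D - {e}" using fs fD by auto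
      ultimately show ?thesis unfolding S_def by blast
    qed
    have heS: "h e \<in> S" unfolding S_def by (rule CollectI, rule exI[of _ "[]"]) simp
    have finS: "finite S" using SV finV finite_subset by blast
    have "(\<Sum>v\<in>S. card {f\<in>D. t f = v}) = (\<Sum>v\<in>S. card {f\<in>D. h f = v})"
      by (rule sum.cong) (use bal SV in auto)
    then have "card {f\<in>D. t f \<in> S} = card {f\<in>D. h f \<in> S}"
      using card_group[OF finS finD, of t] card_group[OF finS finD, of h] by simp
    moreover have "{f\<in>D. t f \<in> S} \<subseteq> {f\<in>D. h f \<in> S}"
      using clos nS by blast
    moreover have "e \<in> {f\<in>D. h f \<in> S}" "e \<notin> {f\<in>D. t f \<in> S}" using heS e nS by auto
    ultimately have "{f\<in>D. t f \<in> S} \<subset> {f\<in>D. h f \<in> S}" by blast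
    moreover have "finite {f\<in>D. h f \<in> S}" using finD by simp
    ultimately have "card {f\<in>D. t f \<in> S} < card {f\<in>D. h f \<in> S}" by (simp add: psubset_card_mono)
    then show False using \<open>card {f\<in>D. t f \<in> S} = card {f\<in>D. h f \<in> S}\<close> by simp
  qed
  then obtain fs where fs: "set fs \<subseteq> D - {e}" "dpath t h fs (h e) (t e)" unfolding S_def by blast
  then obtain gs where gs: "dpath t h gs (h e) (t e)" "set gs \<subseteq> D - {e}" "distinct (map t gs)" "t e \<notin> t ` set gs"
    using dpath_distinct[OF fs(2)] fs(1) by blast
  let ?es = "e # gs"
  have dt: "distinct (map t ?es)" using gs by simp
  have cyc: "\<forall>i<length ?es. h (?es!i) = t (?es!((i+1) mod length ?es))"
  proof (intro allI impI)
    fix i assume i: "i < length ?es"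
    show "h (?es!i) = t (?es!((i+1) mod length ?es))"
    proof (cases "i + 1 < length ?es")
      case True
      then have m: "(i+1) mod length ?es = i + 1" by simp
      show ?thesis
      proof (cases i)
        case 0
        then have "gs \<noteq> []" using True by auto
        then have "t (hd gs) = h e" using dpath_hd[OF gs(1)] by simp
        then show ?thesis using 0 m \<open>gs \<noteq> []\<close> by (simp add: hd_conv_nth)
      next
        case (Suc k)
        then show ?thesis using m True dpath_nth[OF gs(1), of k] by simp
      qed
    next
      case False
      then have ii: "i = length gs" using i by simp
      then have m: "(i+1) mod length ?es = 0" by simp
      show ?thesis
      proof (cases "gs = []")
        case True then show ?thesis using gs(1) ii m by simp
      next
        case False
        then have "h (last gs) = t e" using dpath_last[OF gs(1)] by simp
        then show ?thesis using ii m False by (simp add: last_conv_nth)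
      qed
    qed
  qed
  have "distinct ?es" using dt distinct_map by metis
  moreover have "set ?es \<subseteq> D" using gs e by auto
  ultimately show ?thesis using dt cyc by (intro exI[of _ ?es]) simp
qed

lemma card_fiber:
  assumes "inj_on g A"
  shows "card {f\<in>A. g f = v} = (if v \<in> g ` A then 1 else 0)"
proof (cases "v \<in> g ` A")
  case True
  then obtain a where a: "a \<in> A" "g a = v" by blast
  then have "{f\<in>A. g f = v} = {a}" using assms by (auto simp: inj_on_def)
  then show ?thesis using True by simp
next
  case False
  then have e: "{f\<in>A. g f = v} = {}" by auto
  show ?thesis unfolding e using False by simp
qed

lemma cycle_balanced:
  assumes "distinct (map t es)" "\<forall>i<length es. h (es!i) = t (es!((i+1) mod length es))"
  shows "card {f\<in>set es. t f = v} = card {f\<in>set es. h f = v}"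
proof -
  have r: "map h es = rotate 1 (map t es)"
    by (rule nth_equalityI) (use assms(2) in \<open>auto simp: nth_rotate1 intro!: nth_map[symmetric] mod_less_divisor\<close>)
  then have dh: "distinct (map h es)" using assms(1) by simp
  have "set (map h es) = set (map t es)" using r by simp
  then have "h ` set es = t ` set es" by simp
  moreover have it: "inj_on t (set es)" "inj_on h (set es)" using assms(1) dh distinct_map by auto
  ultimately show ?thesis using card_fiber[OF it(1), of v] card_fiber[OF it(2), of v] by simp
qed


definition outd :: "'e set \<Rightarrow> ('e \<Rightarrow> 'v \<times> 'v) \<Rightarrow> 'e set \<Rightarrow> 'v \<Rightarrow> nat" where
  "outd E ends R v = card {e\<in>E. fst (arc ends R e) = v}"
definition ind :: "'e set \<Rightarrow> ('e \<Rightarrow> 'v \<times> 'v) \<Rightarrow> 'e set \<Rightarrow> 'v \<Rightarrow> nat" where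
  "ind E ends R v = card {e\<in>E. snd (arc ends R e) = v}"

lemma arc_diff: "(e \<in> R1) \<noteq> (e \<in> R2) \<Longrightarrow>
  fst (arc ends R2 e) = snd (arc ends R1 e) \<and> snd (arc ends R2 e) = fst (arc ends R1 e)"
  unfolding arc_def by auto

lemma arc_same: "(e \<in> R1) = (e \<in> R2) \<Longrightarrow> arc ends R2 e = arc ends R1 e"
  unfolding arc_def by auto

lemma card_split:
  assumes "finite E"
  shows "card {e\<in>E. P e} = card {e\<in>E. Q e \<and> P e} + card {e\<in>E. \<not> Q e \<and> P e}"
proof -
  have "{e\<in>E. P e} = {e\<in>E. Q e \<and> P e} \<union> {e\<in>E. \<not> Q e \<and> P e}" by auto
  then show ?thesis using assms by (simp add: card_Un_disjoint disjoint_iff)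
qed

lemma card_split2:
  assumes "finite E"
  shows "card {e\<in>E. P e} = card {e\<in>{e\<in>E. Q e}. P e} + card {e\<in>E. \<not> Q e \<and> P e}"
proof -
  have "{e\<in>{e\<in>E. Q e}. P e} = {e\<in>E. Q e \<and> P e}" by blast
  then show ?thesis using card_split[OF assms, of P Q] by simp
qed

lemma equiv_v:
  assumes "finite E"
  shows "card {e\<in>{e\<in>E. (e \<in> R1) \<noteq> (e \<in> R2)}. fst (arc ends R1 e) = v} =
         card {e\<in>{e\<in>E. (e \<in> R1) \<noteq> (e \<in> R2)}. snd (arc ends R1 e) = v}
     \<longleftrightarrow> outd E ends R1 v + ind E ends R2 v = outd E ends R2 v + ind E ends R1 v"
proof -
  define D where "D = {e\<in>E. (e \<in> R1) \<noteq> (e \<in> R2)}"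
  let ?Q = "\<lambda>e. (e \<in> R1) \<noteq> (e \<in> R2)"
  define a where "a = card {e\<in>D. fst (arc ends R1 e) = v}"
  define b where "b = card {e\<in>D. snd (arc ends R1 e) = v}"
  define x where "x = card {e\<in>E. \<not> ?Q e \<and> fst (arc ends R1 e) = v}"
  define y where "y = card {e\<in>E. \<not> ?Q e \<and> snd (arc ends R1 e) = v}"
  have o1: "outd E ends R1 v = a + x" unfolding outd_def a_def x_def D_def
    by (rule card_split2[OF assms])
  have i1: "ind E ends R1 v = b + y" unfolding ind_def b_def y_def D_def
    by (rule card_split2[OF assms])
  have o2: "outd E ends R2 v = b + x"
  proof -
    have "outd E ends R2 v = card {e\<in>D. fst (arc ends R2 e) = v} + card {e\<in>E. \<not> ?Q e \<and> fst (arc ends R2 e) = v}"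
      unfolding outd_def D_def by (rule card_split2[OF assms])
    moreover have "{e\<in>D. fst (arc ends R2 e) = v} = {e\<in>D. snd (arc ends R1 e) = v}"
      unfolding D_def using arc_diff[of _ R1 R2 ends] by auto
    moreover have "{e\<in>E. \<not> ?Q e \<and> fst (arc ends R2 e) = v} = {e\<in>E. \<not> ?Q e \<and> fst (arc ends R1 e) = v}"
      using arc_same[of _ R1 R2 ends] by auto
    ultimately show ?thesis unfolding b_def x_def by simp
  qed
  have i2: "ind E ends R2 v = a + y"
  proof -
    have "ind E ends R2 v = card {e\<in>D. snd (arc ends R2 e) = v} + card {e\<in>E. \<not> ?Q e \<and> snd (arc ends R2 e) = v}"
      unfolding ind_def D_def by (rule card_split2[OF assms])
    moreover have "{e\<in>D. snd (arc ends R2 e) = v} = {e\<in>D. fst (arc ends R1 e) = v}"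
      unfolding D_def using arc_diff[of _ R1 R2 ends] by auto
    moreover have "{e\<in>E. \<not> ?Q e \<and> snd (arc ends R2 e) = v} = {e\<in>E. \<not> ?Q e \<and> snd (arc ends R1 e) = v}"
      using arc_same[of _ R1 R2 ends] by auto
    ultimately show ?thesis unfolding a_def y_def by simp
  qed
  show ?thesis unfolding D_def[symmetric] a_def[symmetric] b_def[symmetric] using o1 o2 i1 i2 by linarith
qed

lemma equiv_char:
  assumes "finite E"
  shows "eulerian_equiv V E ends R1 R2 \<longleftrightarrow>
    (\<forall>v\<in>V. outd E ends R1 v + ind E ends R2 v = outd E ends R2 v + ind E ends R1 v)"
  unfolding eulerian_equiv_def Let_def
  apply (rule ball_cong[OF refl])
  apply (rule equiv_v[OF assms])
  done

lemma card_group_arc: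
  assumes "finite S" "finite E"
  shows "(\<Sum>v\<in>S. outd E ends R v) = card {e\<in>E. fst (arc ends R e) \<in> S}"
    and "(\<Sum>v\<in>S. ind E ends R v) = card {e\<in>E. snd (arc ends R e) \<in> S}"
  unfolding outd_def ind_def by (rule card_group[OF assms, symmetric])+

lemma dcut_transfer:
  assumes g: "graph V E ends"
    and eq: "\<forall>v\<in>V. outd E ends R1 v + ind E ends R2 v = outd E ends R2 v + ind E ends R1 v"
    and d2: "has_nonempty_dcut V E ends R2"
  shows "has_nonempty_dcut V E ends R1"
proof -
  have finV: "finite V" and finE: "finite E" using g unfolding graph_def by auto
  obtain S where S: "S \<subseteq> V"
    and cne: "{e\<in>E. (fst (ends e) \<in> S) \<noteq> (snd (ends e) \<in> S)} \<noteq> {}"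
    and dir: "\<forall>e\<in>{e\<in>E. (fst (ends e) \<in> S) \<noteq> (snd (ends e) \<in> S)}. fst (arc ends R2 e) \<in> S \<and> snd (arc ends R2 e) \<notin> S"
    using d2 unfolding has_nonempty_dcut_def Let_def by blast
  define cut where "cut = {e\<in>E. (fst (ends e) \<in> S) \<noteq> (snd (ends e) \<in> S)}"
  have finS: "finite S" using S finV finite_subset by blast
  define c where "c = card {e\<in>E. fst (ends e) \<in> S \<and> snd (ends e) \<in> S}"
  define A where "A R = {e\<in>E. fst (arc ends R e) \<in> S \<and> snd (arc ends R e) \<notin> S}" for R
  define B where "B R = {e\<in>E. snd (arc ends R e) \<in> S \<and> fst (arc ends R e) \<notin> S}" for R
  have both: "{e\<in>E. fst (arc ends R e) \<in> S \<and> snd (arc ends R e) \<in> S} = {e\<in>E. fst (ends e) \<in> S \<and> snd (ends e) \<in> S}" for R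
    unfolding arc_def by auto
  have out_eq: "card {e\<in>E. fst (arc ends R e) \<in> S} = c + card (A R)" for R
  proof -
    have "card {e\<in>E. fst (arc ends R e) \<in> S} = card {e\<in>E. snd (arc ends R e) \<in> S \<and> fst (arc ends R e) \<in> S}
       + card {e\<in>E. \<not> snd (arc ends R e) \<in> S \<and> fst (arc ends R e) \<in> S}"
      by (rule card_split[OF finE])
    moreover have "{e\<in>E. snd (arc ends R e) \<in> S \<and> fst (arc ends R e) \<in> S} = {e\<in>E. fst (arc ends R e) \<in> S \<and> snd (arc ends R e) \<in> S}" by auto
    moreover have "{e\<in>E. \<not> snd (arc ends R e) \<in> S \<and> fst (arc ends R e) \<in> S} = A R" unfolding A_def by auto
    ultimately show ?thesis using both c_def by simp
  qed
  have in_eq: "card {e\<in>E. snd (arc ends R e) \<in> S} = c + card (B R)" for R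
  proof -
    have "card {e\<in>E. snd (arc ends R e) \<in> S} = card {e\<in>E. fst (arc ends R e) \<in> S \<and> snd (arc ends R e) \<in> S}
       + card {e\<in>E. \<not> fst (arc ends R e) \<in> S \<and> snd (arc ends R e) \<in> S}"
      by (rule card_split[OF finE])
    moreover have "{e\<in>E. \<not> fst (arc ends R e) \<in> S \<and> snd (arc ends R e) \<in> S} = B R" unfolding B_def by auto
    ultimately show ?thesis using both c_def by simp
  qed
  have cutAB: "cut = A R \<union> B R" for R unfolding cut_def A_def B_def arc_def by auto
  have disjAB: "A R \<inter> B R = {}" for R unfolding A_def B_def by auto
  have finAB: "finite (A R)" "finite (B R)" for R unfolding A_def B_def using finE by auto
  have cardcut: "card cut = card (A R) + card (B R)" for R
    using cutAB[of R] disjAB[of R] finAB[of R] by (simp add: card_Un_disjoint)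
  have B2: "B R2 = {}"
  proof -
    have "e \<notin> B R2" for e
    proof
      assume eB: "e \<in> B R2"
      then have "e \<in> cut" unfolding B_def cut_def arc_def by (auto split: if_splits)
      then show False using dir eB unfolding B_def cut_def by blast
    qed
    then show ?thesis by blast
  qed
  have "(\<Sum>v\<in>S. outd E ends R1 v + ind E ends R2 v) = (\<Sum>v\<in>S. outd E ends R2 v + ind E ends R1 v)"
    by (rule sum.cong) (use eq S in auto)
  then have "card {e\<in>E. fst (arc ends R1 e) \<in> S} + card {e\<in>E. snd (arc ends R2 e) \<in> S}
     = card {e\<in>E. fst (arc ends R2 e) \<in> S} + card {e\<in>E. snd (arc ends R1 e) \<in> S}"
    by (simp add: sum.distrib card_group_arc[OF finS finE])
  then have "card (A R1) + card (B R2) = card (A R2) + card (B R1)"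
    using out_eq in_eq by simp
  then have "card (B R1) = 0" using cardcut[of R1] cardcut[of R2] B2 by simp
  then have "B R1 = {}" using finAB by simp
  then have "\<forall>e\<in>cut. fst (arc ends R1 e) \<in> S \<and> snd (arc ends R1 e) \<notin> S"
    using cutAB[of R1] unfolding A_def by auto
  then show ?thesis unfolding has_nonempty_dcut_def Let_def using S cne cut_def by blast
qed


definition rank :: "'e set \<Rightarrow> ('e \<Rightarrow> 'e \<Rightarrow> bool) \<Rightarrow> 'e \<Rightarrow> nat" where
  "rank E lt e = card {f\<in>E. lt f e}"

definition mu :: "'e set \<Rightarrow> ('e \<Rightarrow> 'e \<Rightarrow> bool) \<Rightarrow> 'e set \<Rightarrow> nat" where
  "mu E lt R = (\<Sum>e\<in>R. (2::nat) ^ rank E lt e)"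

lemma rank_less:
  assumes "finite E" "strict_total_order_on E lt" "f \<in> E" "e \<in> E" "lt f e"
  shows "rank E lt f < rank E lt e"
proof -
  have "{g\<in>E. lt g f} \<subset> {g\<in>E. lt g e}"
    using assms unfolding strict_total_order_on_def by blast
  then show ?thesis unfolding rank_def using assms(1) by (simp add: psubset_card_mono)
qed

lemma rank_inj:
  assumes "finite E" "strict_total_order_on E lt"
  shows "inj_on (rank E lt) E"
proof (rule inj_onI)
  fix x y assume xE: "x \<in> E" and yE: "y \<in> E" and eq: "rank E lt x = rank E lt y"
  show "x = y"
  proof (rule ccontr)
    assume "x \<noteq> y"
    then have "lt x y \<or> lt y x" using assms(2) xE yE unfolding strict_total_order_on_def by blast
    then show False using rank_less[OF assms xE yE] rank_less[OF assms yE xE] eq by auto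
  qed
qed

lemma sum_below:
  assumes "finite E" "strict_total_order_on E lt" "e \<in> E" "X \<subseteq> {f\<in>E. lt f e}"
  shows "(\<Sum>f\<in>X. (2::nat) ^ rank E lt f) < 2 ^ rank E lt e"
proof -
  have inj: "inj_on (rank E lt) X" using rank_inj[OF assms(1,2)] assms(4) inj_on_subset by blast
  have "X \<subseteq> E" using assms(4) by blast
  then have finX: "finite X" using assms(1) finite_subset by blast
  have "(\<Sum>f\<in>X. (2::nat) ^ rank E lt f) = (\<Sum>k\<in>rank E lt ` X. 2 ^ k)"
    using sum.reindex[OF inj, of "\<lambda>k. (2::nat)^k"] by simp
  also have "\<dots> \<le> (\<Sum>k\<in>{0..<rank E lt e}. 2 ^ k)"
  proof (rule sum_mono2)
    show "rank E lt ` X \<subseteq> {0..<rank E lt e}"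
      using assms rank_less[OF assms(1,2)] by auto
  qed auto
  also have "\<dots> = 2 ^ rank E lt e - 1" by (rule sum_power2)
  also have "\<dots> < 2 ^ rank E lt e" by simp
  finally show ?thesis .
qed

theorem lemma1:
  fixes V :: "'v set" and E :: "'e set" and ends :: "'e \<Rightarrow> 'v \<times> 'v"
    and lt :: "'e \<Rightarrow> 'e \<Rightarrow> bool"
  assumes "graph V E ends"
    and "connected_graph V E ends"
    and "strict_total_order_on E lt"
    and "R \<in> BO V E ends"
  shows "\<exists>!R'. R' \<in> BO V E ends \<and> eulerian_equiv V E ends R R' \<and> reduced E ends lt R'"
proof -
  note g = assms(1) and sto = assms(3) and RBO = assms(4)
  have finV: "finite V" and finE: "finite E" and inV: "\<forall>e\<in>E. fst (ends e) \<in> V \<and> snd (ends e) \<in> V"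
    using g unfolding graph_def by auto
  have inVa: "fst (arc ends Q e) \<in> V \<and> snd (arc ends Q e) \<in> V" if "e \<in> E" for Q e
    using inV that unfolding arc_def by auto
  have BOsub: "Q \<subseteq> E" if "Q \<in> BO V E ends" for Q
    using that unfolding BO_def orientations_def by auto
  have trans: "eulerian_equiv V E ends A C"
    if "eulerian_equiv V E ends A B" "eulerian_equiv V E ends B C" for A B C
  proof -
    have h1: "\<forall>v\<in>V. outd E ends A v + ind E ends B v = outd E ends B v + ind E ends A v"
      using that(1) unfolding equiv_char[OF finE] .
    have h2: "\<forall>v\<in>V. outd E ends B v + ind E ends C v = outd E ends C v + ind E ends B v"
      using that(2) unfolding equiv_char[OF finE] .
    have "\<forall>v\<in>V. outd E ends A v + ind E ends C v = outd E ends C v + ind E ends A v"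
    proof
      fix v assume v: "v \<in> V"
      have "outd E ends A v + ind E ends B v = outd E ends B v + ind E ends A v" using h1 v by blast
      moreover have "outd E ends B v + ind E ends C v = outd E ends C v + ind E ends B v" using h2 v by blast
      ultimately show "outd E ends A v + ind E ends C v = outd E ends C v + ind E ends A v" by linarith
    qed
    then show ?thesis unfolding equiv_char[OF finE] .
  qed
  have sym: "eulerian_equiv V E ends B A" if "eulerian_equiv V E ends A B" for A B
    using that unfolding equiv_char[OF finE] by auto
  have refl: "eulerian_equiv V E ends R R"
    unfolding equiv_char[OF finE] by simp
  show ?thesis
  proof (rule ex_ex1I)
    define P where "P Q = (Q \<in> BO V E ends \<and> eulerian_equiv V E ends R Q)" for Q
    have "P R" unfolding P_def using RBO refl by simp
    then obtain R' where PR': "P R'" and min: "\<forall>y. P y \<longrightarrow> mu E lt R' \<le> mu E lt y"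
      using ex_has_least_nat[of P R "mu E lt"] by blast
    have R'E: "R' \<subseteq> E" using PR' BOsub unfolding P_def by blast
    have "reduced E ends lt R'"
    proof (rule ccontr)
      assume "\<not> reduced E ends lt R'"
      then obtain e es where e: "e \<in> E" "e \<in> R'" and cyc: "dcycle E ends R' es" and ees: "e \<in> set es"
        and small: "\<forall>f\<in>set es. f \<noteq> e \<longrightarrow> lt f e"
        unfolding reduced_def by blast
      have esE: "set es \<subseteq> E" using cyc unfolding dcycle_def by auto
      define R'' where "R'' = (R' - set es) \<union> (set es - R')"
      have D: "{f\<in>E. (f \<in> R') \<noteq> (f \<in> R'')} = set es" using esE unfolding R''_def by auto
      have cd: "distinct (map (\<lambda>f. fst (arc ends R' f)) es)"
        "\<forall>i<length es. snd (arc ends R' (es ! i)) = fst (arc ends R' (es ! ((i + 1) mod length es)))"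
        using cyc unfolding dcycle_def by auto
      have "eulerian_equiv V E ends R' R''"
        unfolding eulerian_equiv_def Let_def D
        using cycle_balanced[OF cd] by simp
      then have eqR: "eulerian_equiv V E ends R R''" using trans PR' unfolding P_def by blast
      have "R'' \<in> BO V E ends"
      proof -
        have "R'' \<subseteq> E" using R'E esE unfolding R''_def by auto
        moreover have "\<not> has_nonempty_dcut V E ends R''"
        proof
          assume "has_nonempty_dcut V E ends R''"
          moreover have eqc: "\<forall>v\<in>V. outd E ends R v + ind E ends R'' v = outd E ends R'' v + ind E ends R v"
            using eqR unfolding equiv_char[OF finE] .
          ultimately have "has_nonempty_dcut V E ends R"
            using dcut_transfer[OF g eqc] by blast
          then show False using RBO unfolding BO_def by simp
        qed
        ultimately show ?thesis unfolding BO_def orientations_def by simp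
      qed
      then have "P R''" unfolding P_def using eqR by simp
      then have le: "mu E lt R' \<le> mu E lt R''" using min by blast
      have finR': "finite R'" using R'E finE finite_subset by blast
      have fines: "finite (set es)" by simp
      have "mu E lt ((R' - set es) \<union> (R' \<inter> set es)) = mu E lt (R' - set es) + mu E lt (R' \<inter> set es)"
        unfolding mu_def by (rule sum.union_disjoint) (use finR' in auto)
      then have m1: "mu E lt R' = mu E lt (R' - set es) + mu E lt (R' \<inter> set es)"
        by (simp add: Un_Diff_Int)
      have m2: "mu E lt R'' = mu E lt (R' - set es) + mu E lt (set es - R')"
        unfolding mu_def R''_def by (rule sum.union_disjoint) (use finR' in auto)
      have "(2::nat) ^ rank E lt e \<le> mu E lt (R' \<inter> set es)"
        unfolding mu_def using e ees finR' by (intro member_le_sum) auto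
      moreover have "mu E lt (set es - R') < 2 ^ rank E lt e"
      proof -
        have "set es - R' \<subseteq> {f\<in>E. lt f e}" using small esE e(2) by auto
        then show ?thesis unfolding mu_def by (rule sum_below[OF finE sto e(1)])
      qed
      ultimately show False using m1 m2 le by linarith
    qed
    then show "\<exists>Q. Q \<in> BO V E ends \<and> eulerian_equiv V E ends R Q \<and> reduced E ends lt Q"
      using PR' unfolding P_def by blast
  next
    fix R1 R2
    assume h1: "R1 \<in> BO V E ends \<and> eulerian_equiv V E ends R R1 \<and> reduced E ends lt R1"
       and h2: "R2 \<in> BO V E ends \<and> eulerian_equiv V E ends R R2 \<and> reduced E ends lt R2"
    have eq12: "eulerian_equiv V E ends R1 R2" using h1 h2 sym trans by blast
    show "R1 = R2"
    proof (rule ccontr)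
      assume ne: "R1 \<noteq> R2"
      define D where "D = {f\<in>E. (f \<in> R1) \<noteq> (f \<in> R2)}"
      have "D \<noteq> {}" using ne BOsub h1 h2 unfolding D_def by blast
      have finD: "finite D" using finE unfolding D_def by simp
      have "Max (rank E lt ` D) \<in> rank E lt ` D"
        using Max_in[of "rank E lt ` D"] finD \<open>D \<noteq> {}\<close> by simp
      then obtain e where eD: "e \<in> D" and emax: "rank E lt e = Max (rank E lt ` D)"
        by (metis imageE)
      have DE: "D \<subseteq> E" unfolding D_def by auto
      have small: "\<forall>f\<in>D. f \<noteq> e \<longrightarrow> lt f e"
      proof (intro ballI impI)
        fix f assume f: "f \<in> D" "f \<noteq> e"
        show "lt f e"
        proof (rule ccontr)
          assume "\<not> lt f e"
          then have "lt e f" using sto f eD DE unfolding strict_total_order_on_def by blast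
          moreover have "e \<in> E" "f \<in> E" using eD f DE by auto
          ultimately have "rank E lt e < rank E lt f" using rank_less[OF finE sto] by blast
          moreover have "rank E lt f \<le> Max (rank E lt ` D)" using f finD by simp
          ultimately show False using emax by simp
        qed
      qed
      have inVD: "\<forall>f\<in>D. fst (arc ends Q f) \<in> V \<and> snd (arc ends Q f) \<in> V" for Q
        using inVa DE by blast
      have bal1: "\<forall>v\<in>V. card {f\<in>D. fst (arc ends R1 f) = v} = card {f\<in>D. snd (arc ends R1 f) = v}"
        using eq12 unfolding eulerian_equiv_def Let_def D_def by simp
      have bal2: "\<forall>v\<in>V. card {f\<in>D. fst (arc ends R2 f) = v} = card {f\<in>D. snd (arc ends R2 f) = v}"
      proof
        fix v assume v: "v \<in> V"
        have "{f\<in>D. fst (arc ends R2 f) = v} = {f\<in>D. snd (arc ends R1 f) = v}"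
          using arc_diff[of _ R1 R2 ends] unfolding D_def by auto
        moreover have "{f\<in>D. snd (arc ends R2 f) = v} = {f\<in>D. fst (arc ends R1 f) = v}"
          using arc_diff[of _ R1 R2 ends] unfolding D_def by auto
        ultimately show "card {f\<in>D. fst (arc ends R2 f) = v} = card {f\<in>D. snd (arc ends R2 f) = v}"
          using bal1 v by simp
      qed
      show False
      proof (cases "e \<in> R1")
        case True
        obtain es where es: "es \<noteq> [] \<and> set es \<subseteq> D \<and> distinct es \<and> distinct (map (\<lambda>f. fst (arc ends R1 f)) es) \<and>
           (\<forall>i<length es. snd (arc ends R1 (es!i)) = fst (arc ends R1 (es!((i+1) mod length es)))) \<and> e \<in> set es"
          using balanced_cycle[OF finV finD inVD bal1 eD] by blast
        then have "dcycle E ends R1 es" using DE unfolding dcycle_def by auto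
        moreover have "\<forall>f\<in>set es. f \<noteq> e \<longrightarrow> lt f e" using es small by blast
        ultimately show False using h1 True eD DE es unfolding reduced_def by blast
      next
        case False
        then have e2: "e \<in> R2" using eD unfolding D_def by auto
        obtain es where es: "es \<noteq> [] \<and> set es \<subseteq> D \<and> distinct es \<and> distinct (map (\<lambda>f. fst (arc ends R2 f)) es) \<and>
           (\<forall>i<length es. snd (arc ends R2 (es!i)) = fst (arc ends R2 (es!((i+1) mod length es)))) \<and> e \<in> set es"
          using balanced_cycle[OF finV finD inVD bal2 eD] by blast
        then have "dcycle E ends R2 es" using DE unfolding dcycle_def by auto
        moreover have "\<forall>f\<in>set es. f \<noteq> e \<longrightarrow> lt f e" using es small by blast
        ultimately show False using h2 e2 eD DE es unfolding reduced_def by blast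
      qed
    qed
  qed
qed


end
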